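(* (i) $\mathcal{T}(D)=\mathcal{S}(D)$ for all $D\in\mathcal{C}^\uparrow$. (ii) For all $C\in\mathcal{C}$: $\mathcal{T}(C\vee\Pi)=C^\uparrow$ and $\mathcal{T}(C^\uparrow)=C\vee\Pi$.
   Context: $\mathcal{C}$ is the class of bivariate copulas, $\mathcal{C}^\uparrow$ the SI copulas ($C(v,\cdot)$ concave for all $v$). $\partial_2$ is the partial derivative in the second argument; $\Pi(u,v)=uv$; $D\vee E(u,v):=\int_0^1\min\{\partial_2D(u,t),\partial_2E(v,t)\}\,dt$; $\mathcal{T}(C):=C\vee\Pi$. For measurable $h:(0,1)\to[0,1]$, $h^*$ is the a.e.-unique decreasing function with $\lambda(h^*\le y)=\lambda(h\le y)$ for all $y$; $C^\uparrow(v,u):=\int_0^uh_v^*(t)\,dt$ with $h_v=\partial_2C(v,\cdot)$. For $C\in\mathcal{C}^\uparrow$: $\partial_2^+C(v,t):=\lim_{s\downarrow t}\partial_2C(v,s)$, $f^{-1}(w):=\inf\{t\in[0,1]:f(t)\le w\}$ for decreasing right-continuous $f$, and $\mathcal{S}(C)(v,u):=\int_0^u(\partial_2^+C(v,\cdot))^{-1}(t)\,dt$. *)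

theory Defs
  imports "HOL-Analysis.Analysis"
begin

definition is_copula :: "(real \<Rightarrow> real \<Rightarrow> real) \<Rightarrow> bool" where
  "is_copula C \<longleftrightarrow>
     (\<forall>u\<in>{0..1}. C u 0 = 0 \<and> C 0 u = 0 \<and> C u 1 = u \<and> C 1 u = u) \<and>
     (\<forall>u1 u2 v1 v2. 0 \<le> u1 \<and> u1 \<le> u2 \<and> u2 \<le> 1 \<and> 0 \<le> v1 \<and> v1 \<le> v2 \<and> v2 \<le> 1 \<longrightarrow>
        C u2 v2 - C u2 v1 - C u1 v2 + C u1 v1 \<ge> 0)"

definition is_SI_copula :: "(real \<Rightarrow> real \<Rightarrow> real) \<Rightarrow> bool" where
  "is_SI_copula C \<longleftrightarrow> is_copula C \<and> (\<forall>v\<in>{0..1}. concave_on {0..1} (\<lambda>t. C v t))"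

definition partial2 :: "(real \<Rightarrow> real \<Rightarrow> real) \<Rightarrow> real \<Rightarrow> real \<Rightarrow> real" where
  "partial2 C u t = (if (\<lambda>s. C u s) differentiable (at t) then deriv (\<lambda>s. C u s) t else 0)"

definition Pi_cop :: "real \<Rightarrow> real \<Rightarrow> real" where
  "Pi_cop u v = u * v"

definition cop_join :: "(real \<Rightarrow> real \<Rightarrow> real) \<Rightarrow> (real \<Rightarrow> real \<Rightarrow> real) \<Rightarrow> real \<Rightarrow> real \<Rightarrow> real" where
  "cop_join D E u v = integral {0..1} (\<lambda>t. min (partial2 D u t) (partial2 E v t))"

definition cop_T :: "(real \<Rightarrow> real \<Rightarrow> real) \<Rightarrow> real \<Rightarrow> real \<Rightarrow> real" where
  "cop_T C = cop_join C Pi_cop"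

text \<open>Decreasing rearrangement on (0,1) (the a.e.-unique one, chosen via SOME).\<close>
definition decr_rearr :: "(real \<Rightarrow> real) \<Rightarrow> real \<Rightarrow> real" where
  "decr_rearr h = (SOME g. antimono_on {0<..<1} g \<and>
      (\<forall>y. emeasure lborel {t\<in>{0<..<1}. g t \<le> y} = emeasure lborel {t\<in>{0<..<1}. h t \<le> y}))"

definition C_up :: "(real \<Rightarrow> real \<Rightarrow> real) \<Rightarrow> real \<Rightarrow> real \<Rightarrow> real" where
  "C_up C v u = integral {0..u} (decr_rearr (\<lambda>t. partial2 C v t))"

definition partial2_plus :: "(real \<Rightarrow> real \<Rightarrow> real) \<Rightarrow> real \<Rightarrow> real \<Rightarrow> real" where
  "partial2_plus C v t =
     Lim (at t within {s. t < s \<and> (\<lambda>x. C v x) differentiable (at s)}) (\<lambda>s. partial2 C v s)"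

definition gen_inv :: "(real \<Rightarrow> real) \<Rightarrow> real \<Rightarrow> real" where
  "gen_inv f w = (if {t\<in>{0..1}. f t \<le> w} = {} then 1 else Inf {t\<in>{0..1}. f t \<le> w})"

definition cop_S :: "(real \<Rightarrow> real \<Rightarrow> real) \<Rightarrow> real \<Rightarrow> real \<Rightarrow> real" where
  "cop_S C v u = integral {0..u} (gen_inv (\<lambda>t. partial2_plus C v t))"

end

theory Submission
  imports Defs
begin

lemma meas_sub_mono:
  fixes H :: "real \<Rightarrow> real"
  assumes Hm: "H \<in> borel_measurable borel"
  shows "antimono (\<lambda>w. measure lborel {t\<in>{0<..<1}. w < H t})"
proof (rule antimonoI)
  fix x y :: real assume "x \<le> y"
  show "measure lborel {t\<in>{0<..<1}. y < H t} \<le> measure lborel {t\<in>{0<..<1}. x < H t}"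
  proof (rule measure_mono_fmeasurable)
    show "{t\<in>{0<..<1}. y < H t} \<subseteq> {t\<in>{0<..<1}. x < H t}" using \<open>x \<le> y\<close> by auto
    show "{t\<in>{0<..<1}. y < H t} \<in> sets lborel" using Hm by measurable
    have s: "{t\<in>{0<..<1}. x < H t} \<in> sets lborel" using Hm by measurable
    have "emeasure lborel {t\<in>{0<..<1}. x < H t} \<le> emeasure lborel {0<..<1::real}"
      by (rule emeasure_mono) auto
    then have "emeasure lborel {t\<in>{0<..<1}. x < H t} < \<infinity>"
      by (simp add: le_less_trans)
    with s show "{t\<in>{0<..<1}. x < H t} \<in> fmeasurable lborel"
      by (rule fmeasurableI)
  qed
qed

lemma layer_cake:
  fixes h :: "real \<Rightarrow> real"
  assumes hm: "(\<lambda>t. if t\<in>{0<..<1} then h t else 0) \<in> borel_measurable borel"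
    and hb: "\<And>t. t\<in>{0<..<1} \<Longrightarrow> 0 \<le> h t \<and> h t \<le> 1"
    and v: "0 \<le> v" "v \<le> 1"
  shows "integral {0..1} (\<lambda>t. min (h t) v) =
         integral {0..v} (\<lambda>w. measure lborel {t\<in>{0<..<1}. w < h t})"
proof -
  define H where "H = (\<lambda>t. if t\<in>{0<..<1} then h t else 0)"
  have Hm[measurable]: "H \<in> borel_measurable borel" using hm H_def by simp
  have Hb: "0 \<le> H t" for t using hb by (auto simp: H_def)
  define m where "m = (\<lambda>w. measure lborel {t\<in>{0<..<1}. w < H t})"
  have mset: "{t\<in>{0<..<1}. w < h t} = {t\<in>{0<..<1}. w < H t}" for w by (auto simp: H_def)
  have m_eq: "(\<lambda>w. measure lborel {t\<in>{0<..<1}. w < h t}) = m" unfolding m_def mset ..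
  have mm[measurable]: "m \<in> borel_measurable borel"
  proof -
    have "mono (\<lambda>w. - m w)" using meas_sub_mono[OF Hm] unfolding m_def antimono_def mono_def by auto
    then have "(\<lambda>w. - m w) \<in> borel_measurable borel" by (rule borel_measurable_mono)
    then have "(\<lambda>w. - (- m w)) \<in> borel_measurable borel" by measurable
    then show ?thesis by simp
  qed
  define f1 where "f1 = (\<lambda>t. indicator {0<..<1} t * min (H t) v)"
  define f2 where "f2 = (\<lambda>w. indicator {0<..<v} w * m w)"
  have f1m[measurable]: "f1 \<in> borel_measurable borel" unfolding f1_def by measurable
  have f2m[measurable]: "f2 \<in> borel_measurable borel" unfolding f2_def by measurable
  have f1p: "0 \<le> f1 t" for t using Hb v by (auto simp: f1_def indicator_def)
  have f2p: "0 \<le> f2 t" for t by (auto simp: f2_def indicator_def m_def)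
  define F where "F = (\<lambda>(t::real,w::real). (indicator {0<..<1} t * indicator {0<..<v} w * indicator {w'. w' < H t} w :: ennreal))"
  have Fm: "F \<in> borel_measurable (lborel \<Otimes>\<^sub>M lborel)"
  proof -
    have "Measurable.pred (lborel \<Otimes>\<^sub>M lborel) (\<lambda>x::real\<times>real. snd x < H (fst x))" by measurable
    then show ?thesis unfolding F_def by (auto simp: indicator_def split_beta')
  qed
  have inner_w: "(\<integral>\<^sup>+ w. F (t, w) \<partial>lborel) = ennreal (f1 t)" for t
  proof -
    have "(\<integral>\<^sup>+ w. F (t, w) \<partial>lborel) = (\<integral>\<^sup>+ w. indicator {0<..<1} t * indicator ({0<..<v} \<inter> {w'. w' < H t}) w \<partial>lborel)"
      by (intro nn_integral_cong) (auto simp: F_def indicator_def)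
    also have "\<dots> = indicator {0<..<1} t * emeasure lborel ({0<..<v} \<inter> {w'. w' < H t})"
      by (subst nn_integral_cmult) auto
    also have "{0<..<v} \<inter> {w'. w' < H t} = {0<..<min v (H t)}" by auto
    also have "emeasure lborel {0<..<min v (H t)} = ennreal (min v (H t))" using Hb[of t] v by simp
    finally show ?thesis unfolding f1_def by (simp add: indicator_def min.commute)
  qed
  have inner_t: "(\<integral>\<^sup>+ t. F (t, w) \<partial>lborel) = ennreal (f2 w)" for w
  proof -
    have "(\<integral>\<^sup>+ t. F (t, w) \<partial>lborel) = (\<integral>\<^sup>+ t. indicator {0<..<v} w * indicator {t\<in>{0<..<1}. w < H t} t \<partial>lborel)"
      by (intro nn_integral_cong) (auto simp: F_def indicator_def)
    also have "\<dots> = indicator {0<..<v} w * emeasure lborel {t\<in>{0<..<1}. w < H t}"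
      by (subst nn_integral_cmult) auto
    also have "emeasure lborel {t\<in>{0<..<1}. w < H t} = ennreal (m w)"
    proof -
      have "{t\<in>{0<..<1}. w < H t} \<in> sets lborel" by measurable
      moreover have "emeasure lborel {t\<in>{0<..<1}. w < H t} \<le> emeasure lborel {0<..<1::real}"
        by (intro emeasure_mono) auto
      ultimately show ?thesis unfolding m_def by (intro emeasure_eq_ennreal_measure) (auto simp: top_unique)
    qed
    finally show ?thesis unfolding f2_def by (simp add: indicator_def)
  qed
  have eqN: "(\<integral>\<^sup>+ t. ennreal (f1 t) \<partial>lborel) = (\<integral>\<^sup>+ w. ennreal (f2 w) \<partial>lborel)"
    using lborel_pair.Fubini[OF Fm] inner_w inner_t by simp
  have fin: "(\<integral>\<^sup>+ t. ennreal (f1 t) \<partial>lborel) \<le> 1"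
  proof -
    have "ennreal (f1 t) \<le> indicator {0<..<1} t" for t
      using Hb hb v by (auto simp: f1_def indicator_def H_def)
    then have "(\<integral>\<^sup>+ t. ennreal (f1 t) \<partial>lborel) \<le> (\<integral>\<^sup>+ t. indicator {0<..<1::real} t \<partial>lborel)"
      by (intro nn_integral_mono) blast
    also have "\<dots> = 1" by simp
    finally show ?thesis .
  qed
  then obtain r where r: "(\<integral>\<^sup>+ t. ennreal (f1 t) \<partial>lborel) = ennreal r" "0 \<le> r"
    by (metis ennreal_cases ennreal_le_1 ennreal_one_less_top leD top_greatest order.trans)
  have i1: "(f1 has_integral r) UNIV" by (rule nn_integral_has_integral[OF f1m f1p r])
  have i2: "(f2 has_integral r) UNIV" using eqN r by (intro nn_integral_has_integral[OF f2m f2p]) auto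
  have "integral {0<..<1} (\<lambda>t. min (h t) v) = r"
  proof -
    have "(\<lambda>x. if x \<in> {0<..<1} then min (h x) v else 0) = f1"
      by (auto simp: f1_def H_def fun_eq_iff)
    then show ?thesis using i1 integral_restrict_UNIV[of "{0<..<1::real}" "\<lambda>t. min (h t) v"]
      by (metis integral_unique)
  qed
  moreover have "integral {0<..<1} (\<lambda>t. min (h t) v) = integral {0..1} (\<lambda>t. min (h t) v)"
    by (rule integral_spike_set) (auto intro: negligible_finite[of "{0,1}"] negligible_subset)
  moreover have "integral {0<..<v} m = r"
  proof -
    have "(\<lambda>x. if x \<in> {0<..<v} then m x else 0) = f2"
      by (auto simp: f2_def fun_eq_iff)
    then show ?thesis using i2 integral_restrict_UNIV[of "{0<..<v}" m]
      by (metis integral_unique)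
  qed
  moreover have "integral {0<..<v} m = integral {0..v} m"
    by (rule integral_spike_set) (auto intro: negligible_finite[of "{0,v}"] negligible_subset)
  ultimately show ?thesis using m_eq by simp
qed


definition dq :: "(real \<Rightarrow> real) \<Rightarrow> real \<Rightarrow> real \<Rightarrow> real" where
  "dq F t k = (F (t + k) - F t) / k"

lemma seq_to_0: "filterlim (\<lambda>n::nat. 1 / (real n + 2)) (at (0::real)) sequentially"
proof -
  have "(\<lambda>n::nat. 1 / (real n + 2)) \<longlonglongrightarrow> 0"
  proof -
    have "(\<lambda>n::nat. 1 / (real (n + 2))) \<longlonglongrightarrow> 0"
      using LIMSEQ_ignore_initial_segment[OF lim_const_over_n[of 1], of 2] by simp
    then show ?thesis by (simp add: add.commute)
  qed
  then show ?thesis unfolding filterlim_at by (auto intro!: always_eventually)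
qed

lemma diff_iff_cauchy:
  fixes F :: "real \<Rightarrow> real"
  shows "F differentiable (at t) \<longleftrightarrow>
    (\<forall>m::nat. \<exists>n::nat. \<forall>a b. 0 < \<bar>a\<bar> \<and> \<bar>a\<bar> < 1/(real n+1) \<and> 0 < \<bar>b\<bar> \<and> \<bar>b\<bar> < 1/(real n+1)
        \<longrightarrow> \<bar>dq F t a - dq F t b\<bar> \<le> 1/(real m+1))" (is "?L \<longleftrightarrow> ?R")
proof
  assume ?L
  then obtain L where "(F has_real_derivative L) (at t)" using real_differentiable_def by blast
  then have lim: "(dq F t \<longlongrightarrow> L) (at 0)" unfolding DERIV_def dq_def[abs_def] .
  show ?R
  proof
    fix m :: nat
    have "0 < 1/(2*(real m+1))" by simp
    with lim have "eventually (\<lambda>k. dist (dq F t k) L < 1/(2*(real m+1))) (at 0)"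
      by (rule tendstoD)
    then obtain d where d: "d > 0" "\<And>k. k \<noteq> 0 \<Longrightarrow> dist k 0 < d \<Longrightarrow> dist (dq F t k) L < 1/(2*(real m+1))"
      unfolding eventually_at by auto
    obtain n :: nat where n: "inverse (real (Suc n)) < d" using reals_Archimedean[OF d(1)] by auto
    show "\<exists>n::nat. \<forall>a b. 0 < \<bar>a\<bar> \<and> \<bar>a\<bar> < 1/(real n+1) \<and> 0 < \<bar>b\<bar> \<and> \<bar>b\<bar> < 1/(real n+1)
        \<longrightarrow> \<bar>dq F t a - dq F t b\<bar> \<le> 1/(real m+1)"
    proof (intro exI allI impI)
      fix a b :: real
      assume ab: "0 < \<bar>a\<bar> \<and> \<bar>a\<bar> < 1/(real n+1) \<and> 0 < \<bar>b\<bar> \<and> \<bar>b\<bar> < 1/(real n+1)"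
      have "1/(real n+1) = inverse (real (Suc n))" by (simp add: divide_inverse)
      then have "dist a 0 < d" "dist b 0 < d" using ab n by (auto simp: dist_real_def)
      then have "dist (dq F t a) L < 1/(2*(real m+1))" "dist (dq F t b) L < 1/(2*(real m+1))"
        using ab d(2) by auto
      moreover have "1/(2*(real m+1)) + 1/(2*(real m+1)) = 1/(real m+1)" by (simp add: field_simps)
      ultimately show "\<bar>dq F t a - dq F t b\<bar> \<le> 1/(real m+1)"
        unfolding dist_real_def by (smt (verit))
    qed
  qed
next
  assume R: ?R
  define x where "x = (\<lambda>n::nat. dq F t (1 / (real n + 2)))"
  have small: "1 / (real p + 2) < 1 / (real N + 1)" if "N \<le> p" for N p :: nat
    using that by (simp add: frac_less2)
  have "Cauchy x"
  proof (rule metric_CauchyI)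
    fix e :: real assume "e > 0"
    obtain m :: nat where m: "inverse (real (Suc m)) < e" using reals_Archimedean[OF \<open>e>0\<close>] by auto
    obtain N :: nat where N: "\<And>a b. 0 < \<bar>a\<bar> \<and> \<bar>a\<bar> < 1/(real N+1) \<and> 0 < \<bar>b\<bar> \<and> \<bar>b\<bar> < 1/(real N+1)
        \<Longrightarrow> \<bar>dq F t a - dq F t b\<bar> \<le> 1/(real m+1)" using R by blast
    show "\<exists>M. \<forall>p\<ge>M. \<forall>q\<ge>M. dist (x p) (x q) < e"
    proof (intro exI allI impI)
      fix p q assume "N \<le> p" "N \<le> q"
      then have "\<bar>x p - x q\<bar> \<le> 1/(real m+1)" unfolding x_def
        by (intro N) (auto simp: small)
      also have "\<dots> < e" using m by (simp add: divide_inverse add.commute)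
      finally show "dist (x p) (x q) < e" by (simp add: dist_real_def)
    qed
  qed
  then obtain L where xL: "x \<longlonglongrightarrow> L" using Cauchy_convergent_iff convergent_def by blast
  have "(dq F t \<longlongrightarrow> L) (at 0)"
  proof (rule tendstoI)
    fix e :: real assume "e > 0"
    obtain m :: nat where m: "inverse (real (Suc m)) < e" using reals_Archimedean[OF \<open>e>0\<close>] by auto
    obtain N :: nat where N: "\<And>a b. 0 < \<bar>a\<bar> \<and> \<bar>a\<bar> < 1/(real N+1) \<and> 0 < \<bar>b\<bar> \<and> \<bar>b\<bar> < 1/(real N+1)
        \<Longrightarrow> \<bar>dq F t a - dq F t b\<bar> \<le> 1/(real m+1)" using R by blast
    have "\<forall>k. k \<noteq> 0 \<and> dist k 0 < 1 / (real N + 1) \<longrightarrow> dist (dq F t k) L < e"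
    proof (intro allI impI)
      fix k :: real assume k: "k \<noteq> 0 \<and> dist k 0 < 1 / (real N + 1)"
      have "(\<lambda>p. \<bar>dq F t k - x p\<bar>) \<longlonglongrightarrow> \<bar>dq F t k - L\<bar>"
        by (intro tendsto_intros xL)
      moreover have "eventually (\<lambda>p. \<bar>dq F t k - x p\<bar> \<le> 1/(real m+1)) sequentially"
        using eventually_ge_at_top[of N]
      proof (rule eventually_mono)
        fix p assume "N \<le> p"
        then show "\<bar>dq F t k - x p\<bar> \<le> 1/(real m+1)" unfolding x_def
          using k by (intro N) (auto simp: small)
      qed
      ultimately have "\<bar>dq F t k - L\<bar> \<le> 1/(real m+1)"
        by (rule tendsto_upperbound) simp
      also have "\<dots> < e" using m by (simp add: divide_inverse add.commute)
      finally show "dist (dq F t k) L < e" by (simp add: dist_real_def)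
    qed
    then show "eventually (\<lambda>k. dist (dq F t k) L < e) (at 0)"
      unfolding eventually_at by (intro exI[of _ "1 / (real N + 1)"]) auto
  qed
  then have "(F has_real_derivative L) (at t)" unfolding DERIV_def dq_def[abs_def] .
  then show ?L using real_differentiable_def by blast
qed

lemma deriv_measurable:
  fixes F :: "real \<Rightarrow> real"
  assumes cF: "continuous_on UNIV F"
  shows "(\<lambda>t. if F differentiable (at t) then deriv F t else 0) \<in> borel_measurable borel"
proof -
  have Fm[measurable]: "F \<in> borel_measurable borel" using cF by (rule borel_measurable_continuous_onI)
  define E where "E = (\<lambda>m n::nat. {t. \<forall>a b. 0 < \<bar>a\<bar> \<and> \<bar>a\<bar> < 1/(real n+1) \<and> 0 < \<bar>b\<bar> \<and> \<bar>b\<bar> < 1/(real n+1)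
        \<longrightarrow> \<bar>dq F t a - dq F t b\<bar> \<le> 1/(real m+1)})"
  have cdq: "continuous_on UNIV (\<lambda>t. dq F t a)" for a
  proof -
    have "(\<lambda>t. dq F t a) = (\<lambda>t. (F (t + a) - F t) * (1/a))" by (auto simp: dq_def)
    then show ?thesis by (simp only:) (intro continuous_intros continuous_on_compose2[OF cF], auto)
  qed
  have "closed (E m n)" for m n
  proof -
    have "E m n = (\<Inter>ab\<in>{ab. 0 < \<bar>fst ab\<bar> \<and> \<bar>fst ab\<bar> < 1/(real n+1) \<and> 0 < \<bar>snd ab\<bar> \<and> \<bar>snd ab\<bar> < 1/(real n+1)}.
        {t. \<bar>dq F t (fst ab) - dq F t (snd ab)\<bar> \<le> 1/(real m+1)})"
      unfolding E_def by auto
    also have "closed \<dots>"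
      by (intro closed_INT ballI closed_Collect_le continuous_intros cdq)
    finally show ?thesis .
  qed
  then have Em[measurable]: "E m n \<in> sets borel" for m n by auto
  define D where "D = {t. \<forall>m. \<exists>n. t \<in> E m n}"
  have Dm[measurable]: "D \<in> sets borel"
  proof -
    have "D = (\<Inter>m. \<Union>n. E m n)" unfolding D_def by auto
    then show ?thesis by auto
  qed
  have Deq: "F differentiable (at t) \<longleftrightarrow> t \<in> D" for t
    unfolding diff_iff_cauchy D_def E_def by simp
  define u where "u = (\<lambda>i t. if t \<in> D then dq F t (1 / (real i + 2)) else 0)"
  have "u i \<in> borel_measurable borel" for i
    unfolding u_def dq_def by measurable
  moreover have "(\<lambda>i. u i t) \<longlonglongrightarrow> (if F differentiable (at t) then deriv F t else 0)" for t
  proof (cases "t \<in> D")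
    case True
    then have "F differentiable (at t)" using Deq by simp
    then have "(F has_real_derivative deriv F t) (at t)" using DERIV_deriv_iff_real_differentiable by blast
    then have "(dq F t \<longlongrightarrow> deriv F t) (at 0)" unfolding DERIV_def dq_def[abs_def] .
    then have "(\<lambda>i. dq F t (1 / (real i + 2))) \<longlonglongrightarrow> deriv F t"
      using seq_to_0 by (rule filterlim_compose)
    then show ?thesis using True Deq unfolding u_def by simp
  next
    case False
    then show ?thesis using Deq unfolding u_def by simp
  qed
  ultimately show ?thesis
    using borel_measurable_LIMSEQ_real[of borel u "\<lambda>t. if F differentiable (at t) then deriv F t else 0"] by auto
qed


lemma cop_lip:
  assumes C: "is_copula C" and u: "u \<in> {0..1}" and st: "0 \<le> s" "s \<le> t" "t \<le> 1"
  shows "0 \<le> C u t - C u s \<and> C u t - C u s \<le> t - s"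
proof -
  have b: "\<forall>x\<in>{0..1}. C x 0 = 0 \<and> C 0 x = 0 \<and> C x 1 = x \<and> C 1 x = x"
   and r: "\<And>u1 u2 v1 v2. 0 \<le> u1 \<and> u1 \<le> u2 \<and> u2 \<le> 1 \<and> 0 \<le> v1 \<and> v1 \<le> v2 \<and> v2 \<le> 1 \<Longrightarrow>
        C u2 v2 - C u2 v1 - C u1 v2 + C u1 v1 \<ge> 0"
    using C unfolding is_copula_def by blast+
  have 1: "C u t - C u s - C 0 t + C 0 s \<ge> 0" using r[of 0 u s t] u st by auto
  have 2: "C 1 t - C 1 s - C u t + C u s \<ge> 0" using r[of u 1 s t] u st by auto
  have "C 0 t = 0" "C 0 s = 0" "C 1 t = t" "C 1 s = s" using b st by auto
  then show ?thesis using 1 2 by auto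
qed

definition clampC :: "(real \<Rightarrow> real \<Rightarrow> real) \<Rightarrow> real \<Rightarrow> real \<Rightarrow> real" where
  "clampC C u x = C u (max 0 (min 1 x))"

lemma cop_absdiff:
  assumes C: "is_copula C" and u: "u \<in> {0..1}" and st: "s \<in> {0..1}" "t \<in> {0..1}"
  shows "\<bar>C u t - C u s\<bar> \<le> \<bar>t - s\<bar>"
proof (cases "s \<le> t")
  case True then show ?thesis using cop_lip[OF C u, of s t] st by auto
next
  case False then show ?thesis using cop_lip[OF C u, of t s] st by auto
qed

lemma clampC_cont:
  assumes C: "is_copula C" and u: "u \<in> {0..1}"
  shows "continuous_on UNIV (clampC C u)"
  unfolding continuous_on_iff
proof (intro ballI allI impI)
  fix x e :: real assume "e > 0"
  show "\<exists>d>0. \<forall>x'\<in>UNIV. dist x' x < d \<longrightarrow> dist (clampC C u x') (clampC C u x) < e"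
  proof (intro exI[of _ e] conjI ballI impI)
    fix x' :: real assume "dist x' x < e"
    have "\<bar>C u (max 0 (min 1 x')) - C u (max 0 (min 1 x))\<bar> \<le> \<bar>max 0 (min 1 x') - max 0 (min 1 x)\<bar>"
      by (rule cop_absdiff[OF C u]) auto
    also have "\<dots> \<le> \<bar>x' - x\<bar>" by (auto simp: abs_if max_def min_def)
    finally show "dist (clampC C u x') (clampC C u x) < e"
      using \<open>dist x' x < e\<close> by (simp add: clampC_def dist_real_def)
  qed (use \<open>e>0\<close> in auto)
qed

lemma local_diff_eq:
  fixes f g :: "real \<Rightarrow> real"
  assumes "open S" "t \<in> S" "\<And>x. x \<in> S \<Longrightarrow> f x = g x"
  shows "(f differentiable (at t) \<longleftrightarrow> g differentiable (at t)) \<and> deriv f t = deriv g t"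
proof
  show "(f differentiable (at t)) = (g differentiable (at t))"
    unfolding real_differentiable_def
    using has_field_derivative_transform_within_open[OF _ assms(1,2), of f _ g]
      has_field_derivative_transform_within_open[OF _ assms(1,2), of g _ f] assms(3)
    by metis
  have "eventually (\<lambda>x. f x = g x) (nhds t)"
    using assms by (auto simp: eventually_nhds)
  then show "deriv f t = deriv g t" by (rule deriv_cong_ev) simp
qed

lemma partial2_clamp:
  assumes t: "t \<in> {0<..<1}"
  shows "partial2 C u t = (if clampC C u differentiable (at t) then deriv (clampC C u) t else 0)"
proof -
  have "(\<lambda>s. C u s) differentiable (at t) \<longleftrightarrow> clampC C u differentiable (at t)"
       "deriv (\<lambda>s. C u s) t = deriv (clampC C u) t"
    using local_diff_eq[of "{0<..<1}" t "\<lambda>s. C u s" "clampC C u"] t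
    by (auto simp: clampC_def)
  then show ?thesis unfolding partial2_def by simp
qed

lemma partial2_meas:
  assumes C: "is_copula C" and u: "u \<in> {0..1}"
  shows "(\<lambda>t. if t \<in> {0<..<1} then partial2 C u t else 0) \<in> borel_measurable borel"
proof -
  have m[measurable]: "(\<lambda>t. if clampC C u differentiable (at t) then deriv (clampC C u) t else 0) \<in> borel_measurable borel"
    by (rule deriv_measurable[OF clampC_cont[OF C u]])
  have "(\<lambda>t. if t \<in> {0<..<1} then partial2 C u t else 0) =
        (\<lambda>t. if t \<in> {0<..<1} then (if clampC C u differentiable (at t) then deriv (clampC C u) t else 0) else 0)"
    using partial2_clamp by auto
  also have "\<dots> \<in> borel_measurable borel" by measurable
  finally show ?thesis .
qed

lemma partial2_bnd:
  assumes C: "is_copula C" and u: "u \<in> {0..1}" and t: "t \<in> {0<..<1}"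
  shows "0 \<le> partial2 C u t \<and> partial2 C u t \<le> 1"
proof (cases "(\<lambda>s. C u s) differentiable (at t)")
  case False then show ?thesis by (simp add: partial2_def)
next
  case True
  then have "((\<lambda>s. C u s) has_real_derivative deriv (\<lambda>s. C u s) t) (at t)"
    using DERIV_deriv_iff_real_differentiable by blast
  then have lim: "((\<lambda>y. (C u y - C u t) / (y - t)) \<longlongrightarrow> deriv (\<lambda>s. C u s) t) (at t)"
    by (simp add: has_field_derivative_iff)
  have ev: "eventually (\<lambda>y. y \<in> {0<..<1} \<and> y \<noteq> t) (at t)"
    using t by (auto simp: eventually_at_filter eventually_nhds intro!: exI[of _ "{0<..<1}"])
  have sl: "0 \<le> (C u y - C u t) / (y - t) \<and> (C u y - C u t) / (y - t) \<le> 1" if "y \<in> {0<..<1}" "y \<noteq> t" for y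
  proof (cases "t < y")
    case True
    then show ?thesis using cop_lip[OF C u, of t y] that t by (auto simp: divide_le_eq)
  next
    case False
    then have "y < t" using that by auto
    have "(C u y - C u t) / (y - t) = (C u t - C u y) / (t - y)" by (metis minus_diff_eq minus_divide_divide)
    then show ?thesis using cop_lip[OF C u, of y t] that t \<open>y<t\<close> by (auto simp: divide_le_eq)
  qed
  have "0 \<le> deriv (\<lambda>s. C u s) t"
    by (rule tendsto_lowerbound[OF lim]) (auto intro: eventually_mono[OF ev] dest: sl)
  moreover have "deriv (\<lambda>s. C u s) t \<le> 1"
    by (rule tendsto_upperbound[OF lim]) (auto intro: eventually_mono[OF ev] dest: sl)
  ultimately show ?thesis using True by (simp add: partial2_def)
qed

lemma partial2_Pi: "partial2 Pi_cop s t = s"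
proof -
  have d: "((\<lambda>x. s * x) has_real_derivative s) (at t)" by (auto intro!: derivative_eq_intros)
  then have "(\<lambda>x. s * x) differentiable (at t)" using real_differentiable_def by blast
  moreover have "(\<lambda>x. Pi_cop s x) = (\<lambda>x. s * x)" by (auto simp: Pi_cop_def)
  ultimately show ?thesis using DERIV_imp_deriv[OF d] unfolding partial2_def by simp
qed

definition mh :: "(real \<Rightarrow> real) \<Rightarrow> real \<Rightarrow> real" where
  "mh h w = measure lborel {t\<in>{0<..<1}. w < h t}"

lemma cop_join_Pi:
  "cop_join C Pi_cop u v = integral {0..1} (\<lambda>t. min (partial2 C u t) v)"
  by (simp add: cop_join_def partial2_Pi)

lemma cop_T_eq:
  "cop_T C u v = integral {0..1} (\<lambda>t. min (partial2 C u t) v)"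
  by (simp add: cop_T_def cop_join_Pi)

lemma cop_join_layer:
  assumes C: "is_copula C" and u: "u \<in> {0..1}" and v: "v \<in> {0..1}"
  shows "cop_join C Pi_cop u v = integral {0..v} (mh (partial2 C u))"
  unfolding cop_join_Pi mh_def
  by (rule layer_cake[OF partial2_meas[OF C u] partial2_bnd[OF C u]]) (use v in auto)


definition sl :: "(real \<Rightarrow> real) \<Rightarrow> real \<Rightarrow> real \<Rightarrow> real" where
  "sl \<phi> a b = (\<phi> b - \<phi> a) / (b - a)"

definition Rd :: "(real \<Rightarrow> real) \<Rightarrow> real \<Rightarrow> real" where
  "Rd \<phi> t = Sup (sl \<phi> t ` {t<..1})"

locale cfun =
  fixes \<phi> :: "real \<Rightarrow> real"
  assumes cc: "concave_on {0..1} \<phi>"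
    and lp: "\<And>s t. 0 \<le> s \<Longrightarrow> s \<le> t \<Longrightarrow> t \<le> 1 \<Longrightarrow> 0 \<le> \<phi> t - \<phi> s \<and> \<phi> t - \<phi> s \<le> t - s"
begin

lemma three:
  assumes "0 \<le> a" "a < t" "t < b" "b \<le> 1"
  shows "sl \<phi> a b \<le> sl \<phi> a t \<and> sl \<phi> t b \<le> sl \<phi> a b"
proof -
  have cv: "convex_on {0..1} (\<lambda>x. - \<phi> x)" using cc by (simp add: concave_on_def)
  have 1: "((- \<phi> a) - (- \<phi> t)) / (a - t) \<le> ((- \<phi> a) - (- \<phi> b)) / (a - b)"
   and 2: "((- \<phi> a) - (- \<phi> b)) / (a - b) \<le> ((- \<phi> t) - (- \<phi> b)) / (t - b)"
    using convex_on_slope_le[OF cv, of a b t] assms by auto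
  have e1: "((- \<phi> a) - (- \<phi> t)) / (a - t) = - sl \<phi> a t"
    unfolding sl_def by (metis minus_diff_eq minus_divide_divide minus_divide_left diff_minus_eq_add uminus_add_conv_diff)
  have e2: "((- \<phi> a) - (- \<phi> b)) / (a - b) = - sl \<phi> a b"
    unfolding sl_def by (metis minus_diff_eq minus_divide_divide minus_divide_left diff_minus_eq_add uminus_add_conv_diff)
  have e3: "((- \<phi> t) - (- \<phi> b)) / (t - b) = - sl \<phi> t b"
    unfolding sl_def by (metis minus_diff_eq minus_divide_divide minus_divide_left diff_minus_eq_add uminus_add_conv_diff)
  show ?thesis using 1 2 unfolding e1 e2 e3 by auto
qed

lemma slb:
  assumes "0 \<le> a" "a < b" "b \<le> 1"
  shows "0 \<le> sl \<phi> a b \<and> sl \<phi> a b \<le> 1"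
  using lp[of a b] assms by (auto simp: sl_def divide_le_eq)

lemma bdd: "t < 1 \<Longrightarrow> 0 \<le> t \<Longrightarrow> bdd_above (sl \<phi> t ` {t<..1})"
  using slb by (auto intro!: bdd_aboveI[of _ 1])

lemma R_upper: "0 \<le> t \<Longrightarrow> t < b \<Longrightarrow> b \<le> 1 \<Longrightarrow> sl \<phi> t b \<le> Rd \<phi> t"
  unfolding Rd_def by (rule cSup_upper) (auto intro: bdd)

lemma R_least: "0 \<le> t \<Longrightarrow> t < 1 \<Longrightarrow> (\<And>b. t < b \<Longrightarrow> b \<le> 1 \<Longrightarrow> sl \<phi> t b \<le> c) \<Longrightarrow> Rd \<phi> t \<le> c"
  unfolding Rd_def by (rule cSup_least) auto

lemma Rb: "0 \<le> t \<Longrightarrow> t < 1 \<Longrightarrow> 0 \<le> Rd \<phi> t \<and> Rd \<phi> t \<le> 1"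
  using R_upper[of t 1] slb[of t 1] R_least[of t 1] slb[of t] by force

lemma R_anti: "0 \<le> t \<Longrightarrow> t < t' \<Longrightarrow> t' < 1 \<Longrightarrow> Rd \<phi> t' \<le> Rd \<phi> t"
proof -
  assume a: "0 \<le> t" "t < t'" "t' < 1"
  have "Rd \<phi> t' \<le> sl \<phi> t t'"
  proof (rule R_least)
    fix b assume b: "t' < b" "b \<le> 1"
    have "sl \<phi> t b \<le> sl \<phi> t t'" "sl \<phi> t' b \<le> sl \<phi> t b" using three[of t t' b] a b by auto
    then show "sl \<phi> t' b \<le> sl \<phi> t t'" by linarith
  qed (use a in auto)
  also have "\<dots> \<le> Rd \<phi> t" by (rule R_upper) (use a in auto)
  finally show ?thesis .
qed

lemma R_sup_approx:
  assumes "0 \<le> t" "t < 1" "e > 0"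
  obtains b0 where "t < b0" "b0 \<le> 1" "Rd \<phi> t - e < sl \<phi> t b0"
proof -
  have "\<not> Rd \<phi> t \<le> Rd \<phi> t - e" using assms by simp
  then have "\<not> (\<forall>b. t < b \<longrightarrow> b \<le> 1 \<longrightarrow> sl \<phi> t b \<le> Rd \<phi> t - e)"
    using R_least[of t "Rd \<phi> t - e"] assms by blast
  then show ?thesis using that by force
qed

lemma R_deriv:
  assumes t: "t \<in> {0<..<1}" and cont: "continuous (at t within {0<..<1}) (Rd \<phi>)"
  shows "(\<phi> has_real_derivative Rd \<phi> t) (at t)"
  unfolding has_field_derivative_iff
proof (rule tendstoI)
  fix e :: real assume e: "e > 0"
  obtain b0 where b0: "t < b0" "b0 \<le> 1" "Rd \<phi> t - e < sl \<phi> t b0"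
    using R_sup_approx[of t e] t e by auto
  obtain d1 where d1: "d1 > 0" "\<And>y. y \<in> {0<..<1} \<Longrightarrow> dist y t < d1 \<Longrightarrow> dist (Rd \<phi> y) (Rd \<phi> t) < e"
    using cont e unfolding continuous_within_eps_delta by blast
  define d where "d = min (b0 - t) (min d1 t)"
  have d: "d > 0" using b0 d1 t by (auto simp: d_def)
  have "\<forall>y. y \<noteq> t \<and> dist y t < d \<longrightarrow> dist ((\<phi> y - \<phi> t) / (y - t)) (Rd \<phi> t) < e"
  proof (intro allI impI)
    fix y assume y: "y \<noteq> t \<and> dist y t < d"
    show "dist ((\<phi> y - \<phi> t) / (y - t)) (Rd \<phi> t) < e"
    proof (cases "t < y")
      case True
      then have yb: "y < b0" "y \<le> 1" using y b0 by (auto simp: d_def dist_real_def)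
      have "(\<phi> y - \<phi> t) / (y - t) = sl \<phi> t y" by (simp add: sl_def)
      moreover have "sl \<phi> t y \<le> Rd \<phi> t" using R_upper[of t y] True yb t by auto
      moreover have "sl \<phi> t b0 \<le> sl \<phi> t y"
        using three[of t y b0] True yb b0 t by (cases "y = b0") auto
      ultimately show ?thesis using b0 by (auto simp: dist_real_def)
    next
      case False
      then have yt: "y < t" using y by auto
      have y0: "0 < y" "y \<in> {0<..<1}" "dist y t < d1" using y t yt by (auto simp: d_def dist_real_def)
      have "(\<phi> y - \<phi> t) / (y - t) = sl \<phi> y t" by (simp add: sl_def) (metis minus_diff_eq minus_divide_divide)
      moreover have "sl \<phi> y t \<le> Rd \<phi> y" using R_upper[of y t] y0 yt t by auto
      moreover have "Rd \<phi> y < Rd \<phi> t + e" using d1(2)[OF y0(2,3)] by (auto simp: dist_real_def)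
      moreover have "sl \<phi> t b0 \<le> sl \<phi> y t"
      proof -
        have "sl \<phi> y b0 \<le> sl \<phi> y t" "sl \<phi> t b0 \<le> sl \<phi> y b0" using three[of y t b0] y0 yt b0 by auto
        then show ?thesis by simp
      qed
      ultimately show ?thesis using b0 by (auto simp: dist_real_def)
    qed
  qed
  then show "eventually (\<lambda>y. dist ((\<phi> y - \<phi> t) / (y - t)) (Rd \<phi> t) < e) (at t)"
    unfolding eventually_at using d by blast
qed

lemma countable_nondiff: "countable {t \<in> {0<..<1}. \<not> \<phi> differentiable (at t)}"
proof -
  have "mono_on {0<..<1} (\<lambda>t. - Rd \<phi> t)"
    by (rule mono_onI) (use R_anti in \<open>fastforce simp: le_less\<close>)
  then have c: "countable {t \<in> {0<..<1}. \<not> continuous (at t within {0<..<1}) (\<lambda>t. - Rd \<phi> t)}"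
    by (rule mono_on_ctble_discont)
  have "{t \<in> {0<..<1}. \<not> \<phi> differentiable (at t)} \<subseteq> {t \<in> {0<..<1}. \<not> continuous (at t within {0<..<1}) (\<lambda>t. - Rd \<phi> t)}"
  proof (intro subsetI CollectI conjI)
    fix t :: real assume tt: "t \<in> {t \<in> {0<..<1}. \<not> \<phi> differentiable (at t)}"
    then show "t \<in> {0<..<1}" by simp
    from tt have t: "0 < t" "t < 1" "\<not> \<phi> differentiable (at t)" by auto
    show "\<not> continuous (at t within {0<..<1}) (\<lambda>t. - Rd \<phi> t)"
    proof
    assume c: "continuous (at t within {0<..<1}) (\<lambda>t. - Rd \<phi> t)"
    have "continuous (at t within {0<..<1}) (Rd \<phi>)" using continuous_minus[OF c] by simp
    then have "(\<phi> has_real_derivative Rd \<phi> t) (at t)" using t by (intro R_deriv) auto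
    then show False using t real_differentiable_def by blast
  qed
  qed
  then show ?thesis using c countable_subset by blast
qed

lemma deriv_eq_R:
  assumes t: "t \<in> {0<..<1}" and d: "\<phi> differentiable (at t)"
  shows "deriv \<phi> t = Rd \<phi> t"
proof -
  have "(\<phi> has_real_derivative deriv \<phi> t) (at t)" using d DERIV_deriv_iff_real_differentiable by blast
  then have lim: "((\<lambda>y. (\<phi> y - \<phi> t) / (y - t)) \<longlongrightarrow> deriv \<phi> t) (at t)"
    by (simp add: has_field_derivative_iff)
  then have limr: "((\<lambda>y. (\<phi> y - \<phi> t) / (y - t)) \<longlongrightarrow> deriv \<phi> t) (at_right t)"
    by (rule tendsto_mono[rotated]) (simp add: at_le)
  have "deriv \<phi> t \<le> Rd \<phi> t"
  proof (rule tendsto_upperbound[OF limr])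
    show "eventually (\<lambda>y. (\<phi> y - \<phi> t) / (y - t) \<le> Rd \<phi> t) (at_right t)"
      by (rule eventually_at_rightI[of t 1]) (use t in \<open>auto intro!: R_upper[unfolded sl_def]\<close>)
  qed simp
  moreover have "Rd \<phi> t \<le> deriv \<phi> t"
  proof (rule R_least)
    fix b assume b: "t < b" "b \<le> 1"
    show "sl \<phi> t b \<le> deriv \<phi> t"
    proof (rule tendsto_lowerbound[OF limr])
      show "eventually (\<lambda>y. sl \<phi> t b \<le> (\<phi> y - \<phi> t) / (y - t)) (at_right t)"
      proof (rule eventually_at_rightI[of t b])
        fix y assume "y \<in> {t<..<b}"
        then show "sl \<phi> t b \<le> (\<phi> y - \<phi> t) / (y - t)"
          using three[of t y b] t b by (auto simp: sl_def)
      qed (use b in auto)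
    qed simp
  qed (use t in auto)
  ultimately show ?thesis by simp
qed

end


lemma measure_ae_interval:
  fixes X Z :: "real set"
  assumes X: "X \<in> sets lborel" "X \<subseteq> {0<..<1}" and Z: "countable Z" and a: "0 \<le> a" "a \<le> 1"
    and key: "\<And>t. t \<in> {0<..<1} \<Longrightarrow> t \<notin> Z \<Longrightarrow> t \<noteq> a \<Longrightarrow> (t \<in> X \<longleftrightarrow> t < a)"
  shows "measure lborel X = a"
proof -
  define Z' where "Z' = insert a Z"
  have Zn: "Z' \<in> null_sets lborel" using Z by (auto simp: Z'_def intro: countable_imp_null_set_lborel)
  have "X - Z' = {0<..<a} - Z'"
    using key X(2) a by (auto simp: Z'_def)
  then have "measure lborel (X - Z') = measure lborel ({0<..<a} - Z')" by simp
  then show ?thesis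
    using measure_Diff_null_set[OF X(1) Zn] measure_Diff_null_set[OF _ Zn, of "{0<..<a}"] a by simp
qed

lemma SI_cfun:
  assumes D: "is_SI_copula D" and u: "u \<in> {0..1}"
  shows "cfun (\<lambda>x. D u x)"
proof
  show "concave_on {0..1} (\<lambda>x. D u x)" using D u by (auto simp: is_SI_copula_def)
  fix s t :: real assume "0 \<le> s" "s \<le> t" "t \<le> 1"
  then show "0 \<le> D u t - D u s \<and> D u t - D u s \<le> t - s"
    using cop_lip[of D u s t] D u by (auto simp: is_SI_copula_def)
qed

definition Ld :: "(real \<Rightarrow> real) \<Rightarrow> real \<Rightarrow> real" where
  "Ld \<phi> t = Sup (Rd \<phi> ` {t<..<1})"

context cfun
begin

lemma Rd_bdd: "0 \<le> t \<Longrightarrow> bdd_above (Rd \<phi> ` {t<..<1})"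
  using Rb by (auto intro!: bdd_aboveI[of _ 1])

lemma Ld_le_R: "0 \<le> t \<Longrightarrow> t < 1 \<Longrightarrow> Ld \<phi> t \<le> Rd \<phi> t"
  unfolding Ld_def by (rule cSup_least) (auto intro: R_anti less_imp_le)

lemma R_le_Ld: "0 \<le> t' \<Longrightarrow> t' < t \<Longrightarrow> t < 1 \<Longrightarrow> Rd \<phi> t \<le> Ld \<phi> t'"
  unfolding Ld_def by (rule cSup_upper) (auto intro: Rd_bdd)

lemma diff_dense:
  assumes "0 \<le> t" "t < 1" "e > 0"
  shows "\<exists>s. t < s \<and> s < min (t + e) 1 \<and> \<phi> differentiable (at s)"
proof -
  have "uncountable ({t<..<min (t + e) 1} - {s \<in> {0<..<1}. \<not> \<phi> differentiable (at s)})"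
    using assms by (intro uncountable_minus_countable countable_nondiff) (auto simp: uncountable_open_interval)
  then obtain s where "s \<in> {t<..<min (t + e) 1} - {s \<in> {0<..<1}. \<not> \<phi> differentiable (at s)}"
    by (metis all_not_in_conv countable_empty)
  then show ?thesis using assms by auto
qed

lemma lim_Ld:
  assumes t: "0 \<le> t" "t < 1"
  shows "Lim (at t within {s. t < s \<and> \<phi> differentiable (at s)})
             (\<lambda>s. if \<phi> differentiable (at s) then deriv \<phi> s else 0) = Ld \<phi> t"
proof (rule tendsto_Lim)
  show "at t within {s. t < s \<and> \<phi> differentiable (at s)} \<noteq> bot"
    unfolding not_trivial_limit_within_ball
  proof (intro allI impI)
    fix e :: real assume "e > 0"
    obtain s where s: "t < s" "s < min (t + e) 1" "\<phi> differentiable (at s)"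
      using diff_dense[OF t \<open>e>0\<close>] by auto
    then have "s \<in> {s. t < s \<and> \<phi> differentiable (at s)} \<inter> ball t e - {t}"
      by (auto simp: dist_real_def)
    then show "{s. t < s \<and> \<phi> differentiable (at s)} \<inter> ball t e - {t} \<noteq> {}" by blast
  qed
  show "((\<lambda>s. if \<phi> differentiable (at s) then deriv \<phi> s else 0) \<longlongrightarrow> Ld \<phi> t)
          (at t within {s. t < s \<and> \<phi> differentiable (at s)})"
  proof (rule tendstoI)
    fix e :: real assume e: "e > 0"
    have ne: "Rd \<phi> ` {t<..<1} \<noteq> {}" using t by auto
    have "\<not> Ld \<phi> t \<le> Ld \<phi> t - e" using e by simp
    then obtain s0 where s0: "s0 \<in> {t<..<1}" "Ld \<phi> t - e < Rd \<phi> s0"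
      unfolding Ld_def using cSup_least[OF ne, of "Sup (Rd \<phi> ` {t<..<1}) - e"] by force
    have "\<forall>s\<in>{s. t < s \<and> \<phi> differentiable (at s)}. s \<noteq> t \<and> dist s t < s0 - t \<longrightarrow>
            dist (if \<phi> differentiable (at s) then deriv \<phi> s else 0) (Ld \<phi> t) < e"
    proof (intro ballI impI)
      fix s assume s: "s \<in> {s. t < s \<and> \<phi> differentiable (at s)}" "s \<noteq> t \<and> dist s t < s0 - t"
      then have ss: "t < s" "s < s0" "\<phi> differentiable (at s)" by (auto simp: dist_real_def)
      have "deriv \<phi> s = Rd \<phi> s" using deriv_eq_R[of s] ss s0 t by auto
      moreover have "Rd \<phi> s0 \<le> Rd \<phi> s" using R_anti[of s s0] ss s0 t by auto
      moreover have "Rd \<phi> s \<le> Ld \<phi> t" using R_le_Ld[of t s] ss s0 t by auto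
      ultimately show "dist (if \<phi> differentiable (at s) then deriv \<phi> s else 0) (Ld \<phi> t) < e"
        using ss s0 by (auto simp: dist_real_def)
    qed
    then show "eventually (\<lambda>s. dist (if \<phi> differentiable (at s) then deriv \<phi> s else 0) (Ld \<phi> t) < e)
          (at t within {s. t < s \<and> \<phi> differentiable (at s)})"
      unfolding eventually_at using s0 by (intro exI[of _ "s0 - t"]) auto
  qed
qed

end

lemma part_i:
  assumes D: "is_SI_copula D" and u: "u \<in> {0..1}" and v: "v \<in> {0..1}"
  shows "cop_T D u v = cop_S D u v"
proof -
  have Dc: "is_copula D" using D by (simp add: is_SI_copula_def)
  define \<phi> where "\<phi> = (\<lambda>x. D u x)"
  interpret cfun \<phi> unfolding \<phi>_def by (rule SI_cfun[OF D u])
  define h where "h = partial2 D u"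
  have h_eq: "h t = (if \<phi> differentiable (at t) then deriv \<phi> t else 0)" for t
    by (simp add: h_def partial2_def \<phi>_def)
  define f where "f = (\<lambda>t. partial2_plus D u t)"
  have f_eq: "f t = Ld \<phi> t" if "0 \<le> t" "t < 1" for t
  proof -
    have "f t = Lim (at t within {s. t < s \<and> \<phi> differentiable (at s)}) h"
      by (simp add: f_def partial2_plus_def h_def \<phi>_def)
    also have "h = (\<lambda>s. if \<phi> differentiable (at s) then deriv \<phi> s else 0)" using h_eq by auto
    finally show ?thesis using lim_Ld[OF that] by simp
  qed
  have hR: "h t = Rd \<phi> t" if "t \<in> {0<..<1}" "\<phi> differentiable (at t)" for t
    using h_eq[of t] deriv_eq_R[OF that] that by simp
  have gi: "gen_inv f w = mh h w" for w
  proof -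
    define A where "A = {t\<in>{0..1}. f t \<le> w}"
    define a where "a = gen_inv f w"
    have a_def': "a = (if A = {} then 1 else Inf A)" unfolding a_def A_def gen_inv_def by (auto simp del: atLeastAtMost_iff)
    have bb: "bdd_below A" unfolding A_def by (auto intro!: bdd_belowI[of _ 0])
    have a01: "0 \<le> a \<and> a \<le> 1"
    proof (cases "A = {}")
      case False
      then obtain x where x: "x \<in> A" by auto
      have "Inf A \<le> x" by (rule cInf_lower[OF x bb])
      moreover have "0 \<le> Inf A" using False by (intro cInf_greatest) (auto simp: A_def)
      ultimately show ?thesis using x False by (auto simp: a_def' A_def)
    qed (simp add: a_def')
    have key: "(t \<in> {t\<in>{0<..<1}. w < h t} \<longleftrightarrow> t < a)"
      if t: "t \<in> {0<..<1}" "t \<notin> {s \<in> {0<..<1}. \<not> \<phi> differentiable (at s)}" "t \<noteq> a" for t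
    proof -
      have dt: "\<phi> differentiable (at t)" using t by auto
      show ?thesis
      proof (cases "t < a")
        case True
        have "t \<notin> A"
        proof
          assume "t \<in> A"
          then have "A \<noteq> {}" by auto
          then have "a \<le> t" using cInf_lower[OF \<open>t\<in>A\<close> bb] by (simp add: a_def')
          then show False using True by simp
        qed
        then have "w < f t" using t by (auto simp: A_def)
        also have "f t = Ld \<phi> t" using f_eq[of t] t by auto
        also have "\<dots> \<le> Rd \<phi> t" using Ld_le_R[of t] t by auto
        also have "\<dots> = h t" using hR[of t] t dt by auto
        finally show ?thesis using True t by auto
      next
        case False
        then have at: "a < t" using t by auto
        then have Ane: "A \<noteq> {}" using t by (auto simp: a_def')
        then have "Inf A < t" using at by (simp add: a_def')
        then obtain t' where t': "t' \<in> A" "t' < t" using cInf_lessD[OF Ane] by blast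
        then have t'b: "0 \<le> t'" "f t' \<le> w" by (auto simp: A_def)
        have "h t = Rd \<phi> t" using hR[of t] t dt by auto
        also have "\<dots> \<le> Ld \<phi> t'" using R_le_Ld[of t' t] t t' t'b by auto
        also have "\<dots> = f t'" using f_eq[of t'] t t' t'b by auto
        finally show ?thesis using t'b False by auto
      qed
    qed
    have Xm: "{t\<in>{0<..<1}. w < h t} \<in> sets lborel"
    proof -
      have m[measurable]: "(\<lambda>t. if t \<in> {0<..<1} then partial2 D u t else 0) \<in> borel_measurable borel"
        by (rule partial2_meas[OF Dc u])
      have "{t\<in>{0<..<1}. w < h t} = {t\<in>{0<..<1}. w < (if t \<in> {0<..<1} then partial2 D u t else 0)}"
        by (auto simp: h_def)
      also have "\<dots> \<in> sets lborel" by measurable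
      finally show ?thesis .
    qed
    have "measure lborel {t\<in>{0<..<1}. w < h t} = a"
      by (rule measure_ae_interval[OF Xm _ countable_nondiff]) (use a01 key in auto)
    then show ?thesis by (simp add: mh_def a_def)
  qed
  have gf: "mh h = gen_inv f" by (rule ext) (rule gi[symmetric])
  have "cop_T D u v = cop_join D Pi_cop u v" by (simp add: cop_T_def)
  also have "\<dots> = integral {0..v} (mh h)" unfolding h_def by (rule cop_join_layer[OF Dc u v])
  also have "\<dots> = integral {0..v} (gen_inv f)" by (simp add: gf)
  also have "\<dots> = cop_S D u v" by (simp add: cop_S_def f_def)
  finally show ?thesis .
qed


definition ifv :: "(real \<Rightarrow> real) \<Rightarrow> real \<Rightarrow> real" where
  "ifv h t = (if t \<in> {0<..<1} then h t else 0)"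

locale dfun =
  fixes h :: "real \<Rightarrow> real"
  assumes hm: "ifv h \<in> borel_measurable borel"
    and hb: "\<And>t. t \<in> {0<..<1} \<Longrightarrow> 0 \<le> h t \<and> h t \<le> 1"
begin

lemma hm'[measurable]: "ifv h \<in> borel_measurable borel" by (rule hm)

lemma set_lt: "{t\<in>{0<..<1}. y < h t} = {t\<in>{0<..<1}. y < ifv h t}"
  by (auto simp: ifv_def)

lemma set_le: "{t\<in>{0<..<1}. h t \<le> y} = {t\<in>{0<..<1}. ifv h t \<le> y}"
  by (auto simp: ifv_def)

lemma sets_lt[measurable]: "{t\<in>{0<..<1}. y < h t} \<in> sets lborel"
  unfolding set_lt by measurable

lemma sets_le[measurable]: "{t\<in>{0<..<1}. h t \<le> y} \<in> sets lborel"
proof -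
  have "{t\<in>{0<..<1}. ifv h t \<le> y} \<in> sets lborel" by measurable
  then show ?thesis by (simp only: set_le)
qed

lemma fm_sub: "X \<subseteq> {0<..<1::real} \<Longrightarrow> X \<in> sets lborel \<Longrightarrow> X \<in> fmeasurable lborel"
proof -
  assume a: "X \<subseteq> {0<..<1::real}" "X \<in> sets lborel"
  have "emeasure lborel X \<le> emeasure lborel {0<..<1::real}" by (rule emeasure_mono) (use a in auto)
  then have "emeasure lborel X < \<infinity>" by (simp add: le_less_trans)
  with a show ?thesis by (intro fmeasurableI) auto
qed

lemma mh_anti: "antimono (mh h)"
proof -
  have "mh h = (\<lambda>w. measure lborel {t\<in>{0<..<1}. w < ifv h t})"
    by (rule ext) (simp only: mh_def set_lt)
  then show ?thesis using meas_sub_mono[OF hm] by simp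
qed

lemma mh_meas[measurable]: "mh h \<in> borel_measurable borel"
proof -
  have "mono (\<lambda>w. - mh h w)" using mh_anti unfolding antimono_def mono_def by auto
  then have "(\<lambda>w. - mh h w) \<in> borel_measurable borel" by (rule borel_measurable_mono)
  then have "(\<lambda>w. - (- mh h w)) \<in> borel_measurable borel" by measurable
  then show ?thesis by simp
qed

lemma mh_compl: "mh h y = 1 - measure lborel {t\<in>{0<..<1}. h t \<le> y}"
proof -
  have "{t\<in>{0<..<1}. y < h t} = {0<..<1} - {t\<in>{0<..<1}. h t \<le> y}" by auto
  then have "mh h y = measure lborel ({0<..<1} - {t\<in>{0<..<1}. h t \<le> y})" by (simp add: mh_def)
  also have "\<dots> = measure lborel {0<..<1::real} - measure lborel {t\<in>{0<..<1}. h t \<le> y}"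
    by (rule measurable_measure_Diff[OF fm_sub sets_le]) auto
  finally show ?thesis by simp
qed

lemma mh_bnd: "0 \<le> mh h w \<and> mh h w \<le> 1"
proof -
  have "measure lborel {t\<in>{0<..<1}. w < h t} \<le> measure lborel {0<..<1::real}"
    by (rule measure_mono_fmeasurable[OF _ sets_lt fm_sub]) auto
  then show ?thesis by (simp add: mh_def)
qed

lemma mh_neg: "w < 0 \<Longrightarrow> mh h w = 1"
proof -
  assume "w < 0"
  have "{t\<in>{0<..<1}. w < h t} = {0<..<1}"
  proof (intro set_eqI iffI)
    fix t assume t: "t \<in> {0<..<1::real}"
    then show "t \<in> {t\<in>{0<..<1}. w < h t}" using hb[OF t] \<open>w < 0\<close> by simp
  qed simp
  then show ?thesis by (simp add: mh_def)
qed

lemma mh_one: "1 \<le> w \<Longrightarrow> mh h w = 0"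
proof -
  assume "1 \<le> w"
  have "{t\<in>{0<..<1}. w < h t} = {}"
  proof (intro set_eqI iffI)
    fix t assume t: "t \<in> {t\<in>{0<..<1}. w < h t}"
    then show "t \<in> {}" using hb[of t] \<open>1 \<le> w\<close> by simp
  qed simp
  then show ?thesis unfolding mh_def by (metis measure_empty)
qed

lemma mh_rc: "(\<lambda>n. mh h (y + 1 / (real n + 1))) \<longlonglongrightarrow> mh h y"
proof -
  define A where "A = (\<lambda>n::nat. {t\<in>{0<..<1}. y + 1 / (real n + 1) < h t})"
  have rA: "range A \<subseteq> sets lborel"
  proof (rule image_subsetI)
    fix n show "A n \<in> sets lborel" unfolding A_def by (rule sets_lt)
  qed
  have iA: "incseq A"
  proof (rule incseq_SucI)
    fix n :: nat
    have "1 / (real (Suc n) + 1) \<le> 1 / (real n + 1)" by (simp add: frac_le)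
    then show "A n \<subseteq> A (Suc n)" unfolding A_def by auto
  qed
  have U: "(\<Union>n. A n) = {t\<in>{0<..<1}. y < h t}"
  proof safe
    fix t assume t: "t \<in> {0<..<1}" "y < h t"
    have "0 < h t - y" using t by simp
    then obtain n :: nat where "inverse (real (Suc n)) < h t - y" using reals_Archimedean by blast
    then have "y + 1 / (real n + 1) < h t" by (simp add: divide_inverse add.commute)
    then show "t \<in> (\<Union>n. A n)" using t unfolding A_def by auto
  next
    fix t n assume tA: "t \<in> A n"
    from tA have a: "t \<in> {0<..<1}" "y + 1/(real n + 1) < h t" unfolding A_def by auto
    have "0 < 1/(real n+1)" by simp
    then show "y < h t" using a by linarith
    show "t \<in> {0<..<1}" using a by simp
  qed
  have eA: "emeasure lborel (\<Union>n. A n) \<noteq> \<infinity>"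
  proof -
    have "{t\<in>{0<..<1}. y < h t} \<in> fmeasurable lborel" by (rule fm_sub[OF _ sets_lt]) auto
    then have "emeasure lborel {t\<in>{0<..<1}. y < h t} < \<infinity>" by (simp add: fmeasurable_def)
    then show ?thesis unfolding U by (metis less_irrefl)
  qed
  have "(\<lambda>n. measure lborel (A n)) \<longlonglongrightarrow> measure lborel (\<Union>n. A n)"
    by (rule Lim_measure_incseq[OF rA iA eA])
  then show ?thesis unfolding U by (simp add: A_def mh_def)
qed

definition g0 :: "real \<Rightarrow> real" where
  "g0 t = Inf {y. mh h y \<le> t}"

lemma g0_iff:
  assumes t: "t \<in> {0<..<1}"
  shows "g0 t \<le> y \<longleftrightarrow> mh h y \<le> t"
proof -
  define B where "B = {y. mh h y \<le> t}"
  have B1: "1 \<in> B" using mh_one[of 1] t by (auto simp: B_def)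
  have Bb: "bdd_below B"
  proof (rule bdd_belowI[of _ 0])
    fix x assume "x \<in> B"
    then show "0 \<le> x" using mh_neg[of x] t by (auto simp: B_def not_le[symmetric])
  qed
  show ?thesis
  proof
    assume "mh h y \<le> t"
    then have "y \<in> B" by (simp add: B_def)
    then show "g0 t \<le> y" unfolding g0_def B_def[symmetric] by (rule cInf_lower[OF _ Bb])
  next
    assume a: "g0 t \<le> y"
    have "eventually (\<lambda>n. mh h (y + 1 / (real n + 1)) \<le> t) sequentially"
    proof (rule always_eventually, rule allI)
      fix n :: nat
      have "Inf B < y + 1 / (real n + 1)" using a unfolding g0_def B_def[symmetric]
        by (simp add: add_pos_pos order.strict_trans1 less_add_same_cancel1)
      then obtain b where b: "b \<in> B" "b < y + 1 / (real n + 1)"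
        using cInf_lessD[of B] B1 by blast
      have "mh h (y + 1 / (real n + 1)) \<le> mh h b" using mh_anti b(2) by (auto simp: antimono_def)
      also have "\<dots> \<le> t" using b(1) by (simp add: B_def)
      finally show "mh h (y + 1 / (real n + 1)) \<le> t" .
    qed
    then show "mh h y \<le> t" by (rule tendsto_upperbound[OF mh_rc]) simp
  qed
qed

lemma emeasure_le_h: "emeasure lborel {t\<in>{0<..<1}. h t \<le> y} = ennreal (1 - mh h y)"
proof -
  have "emeasure lborel {t\<in>{0<..<1}. h t \<le> y} = ennreal (measure lborel {t\<in>{0<..<1}. h t \<le> y})"
  proof -
    have "{t\<in>{0<..<1}. h t \<le> y} \<in> fmeasurable lborel" by (rule fm_sub[OF _ sets_le]) auto
    then show ?thesis by (rule emeasure_eq_measure2)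
  qed
  then show ?thesis by (simp add: mh_compl)
qed

lemma decr_exists:
  "\<exists>g::real\<Rightarrow>real. antimono_on {0<..<1} g \<and>
      (\<forall>y. emeasure lborel {t\<in>{0<..<1}. g t \<le> y} = emeasure lborel {t\<in>{0<..<1}. h t \<le> y})"
proof -
  have A: "antimono_on {0<..<1} g0"
  proof (rule monotone_onI)
    fix r s :: real assume rs: "r \<in> {0<..<1}" "s \<in> {0<..<1}" "r \<le> s"
    show "g0 s \<le> g0 r"
    proof -
      have "mh h (g0 r) \<le> r" using g0_iff[OF rs(1), of "g0 r"] by simp
      then have "mh h (g0 r) \<le> s" using rs(3) by simp
      then show ?thesis using g0_iff[OF rs(2), of "g0 r"] by simp
    qed
  qed
  have B: "emeasure lborel {t\<in>{0<..<1}. g0 t \<le> y} = emeasure lborel {t\<in>{0<..<1}. h t \<le> y}" for y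
  proof -
  have "{t\<in>{0<..<1}. g0 t \<le> y} = {t\<in>{0<..<1}. mh h y \<le> t}"
  proof (rule Collect_cong)
    fix t show "(t \<in> {0<..<1} \<and> g0 t \<le> y) = (t \<in> {0<..<1} \<and> mh h y \<le> t)"
      using g0_iff[of t y] by blast
  qed
  also have "emeasure lborel \<dots> = ennreal (1 - mh h y)"
  proof (cases "mh h y = 0")
    case True
    then have "{t\<in>{0<..<1::real}. mh h y \<le> t} = {0<..<1}" by auto
    then show ?thesis using True by simp
  next
    case False
    have b: "0 < mh h y" "mh h y \<le> 1" using mh_bnd[of y] False by auto
    then have "{t\<in>{0<..<1::real}. mh h y \<le> t} = {mh h y..<1}" by auto
    moreover have "emeasure lborel {mh h y..<1} = ennreal (1 - mh h y)" using b by simp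
    ultimately show ?thesis by simp
  qed
  finally show ?thesis
    using emeasure_le_h by simp
  qed
  show ?thesis by (rule exI[where x=g0]) (use A B in blast)
qed

end


lemma negl_countable: "countable (S::real set) \<Longrightarrow> negligible S"
proof -
  assume c: "countable S"
  have "S = \<Union>((\<lambda>x. {x}) ` S)" by auto
  also have "negligible \<dots>" using c by (intro negligible_countable_Union) auto
  finally show ?thesis .
qed

lemma deriv_int:
  fixes f K :: "real \<Rightarrow> real"
  assumes fi: "f integrable_on {0..1}" and t: "t \<in> {0<..<1}" and c: "isCont f t"
    and K: "\<And>s. s \<in> {0<..<1} \<Longrightarrow> K s = integral {0..s} f"
  shows "(K has_real_derivative f t) (at t)"
proof -
  have "((\<lambda>u. integral {0..u} f) has_vector_derivative f t) (at t within {0..1} - {})"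
    by (rule integral_has_vector_derivative_continuous_at[OF fi])
       (use t c in \<open>auto intro: continuous_at_imp_continuous_within\<close>)
  moreover have "at t within {0..1} = at t"
    by (rule at_within_interior) (use t in simp)
  ultimately have "((\<lambda>u. integral {0..u} f) has_real_derivative f t) (at t)"
    by (simp add: has_real_derivative_iff_has_vector_derivative)
  then show ?thesis
    by (rule has_field_derivative_transform_within_open[of _ _ _ "{0<..<1}"]) (use t K in auto)
qed

lemma partial2_from_deriv:
  assumes "((\<lambda>s. K u s) has_real_derivative d) (at t)"
  shows "partial2 K u t = d"
proof -
  have "(\<lambda>s. K u s) differentiable (at t)" using assms real_differentiable_def by blast
  then show ?thesis using DERIV_imp_deriv[OF assms] by (simp add: partial2_def)
qed

locale gfun = dfun +
  fixes g :: "real \<Rightarrow> real"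
  assumes ganti: "antimono_on {0<..<1} g"
    and geq: "\<And>y. emeasure lborel {t\<in>{0<..<1}. g t \<le> y} = emeasure lborel {t\<in>{0<..<1}. h t \<le> y}"
begin

lemma ganti': "r \<in> {0<..<1} \<Longrightarrow> s \<in> {0<..<1} \<Longrightarrow> r \<le> s \<Longrightarrow> g s \<le> g r"
  using ganti by (auto simp: monotone_on_def)

lemma g_meas[measurable]: "ifv g \<in> borel_measurable borel"
proof -
  have "mono_on {0<..<1} (\<lambda>t. - g t)" by (rule mono_onI) (metis ganti' neg_le_iff_le)
  then have "(\<lambda>t. - g t) \<in> borel_measurable (restrict_space borel {0<..<1})"
    by (rule borel_measurable_mono_on_fnc)
  then have "(\<lambda>x. indicator {0<..<1} x *\<^sub>R (- g x)) \<in> borel_measurable borel"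
    by (subst (asm) borel_measurable_restrict_space_iff) auto
  then have "(\<lambda>x. - (indicator {0<..<1} x *\<^sub>R (- g x))) \<in> borel_measurable borel" by measurable
  moreover have "(\<lambda>x. - (indicator {0<..<1} x *\<^sub>R (- g x))) = ifv g"
    by (auto simp: ifv_def indicator_def fun_eq_iff)
  ultimately show ?thesis by simp
qed

lemma gsets_le[measurable]: "{t\<in>{0<..<1}. g t \<le> y} \<in> sets lborel"
proof -
  have A: "{t\<in>{0<..<1}. ifv g t \<le> y} \<in> sets lborel" by measurable
  have B: "{t\<in>{0<..<1}. ifv g t \<le> y} = {t\<in>{0<..<1}. g t \<le> y}" by (auto simp: ifv_def)
  show ?thesis using A by (simp only: B)
qed

lemma g_bnd: "t \<in> {0<..<1} \<Longrightarrow> 0 \<le> g t \<and> g t \<le> 1"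
proof
  assume t0: "t \<in> {0<..<1}"
  show "0 \<le> g t"
  proof (rule ccontr)
    assume neg: "\<not> 0 \<le> g t"
    have "{t..<1} \<subseteq> {s\<in>{0<..<1}. g s \<le> g t}" using t0 ganti' by auto
    then have "emeasure lborel {t..<1} \<le> emeasure lborel {s\<in>{0<..<1}. g s \<le> g t}"
      by (rule emeasure_mono) (rule gsets_le)
    also have "\<dots> = emeasure lborel {s\<in>{0<..<1}. h s \<le> g t}" by (rule geq)
    also have "{s\<in>{0<..<1}. h s \<le> g t} = {}" using hb neg by force
    finally show False using t0 by simp
  qed
  show "g t \<le> 1"
  proof (rule ccontr)
    assume big: "\<not> g t \<le> 1"
    have "{s\<in>{0<..<1}. g s \<le> 1} \<subseteq> {t..<1}"
    proof
      fix s assume s: "s \<in> {s\<in>{0<..<1}. g s \<le> 1}"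
      show "s \<in> {t..<1}"
      proof (rule ccontr)
        assume "s \<notin> {t..<1}"
        then have "s < t" using s by auto
        then have "g t \<le> g s" using ganti'[of s t] s t0 by auto
        then show False using s big by auto
      qed
    qed
    then have "emeasure lborel {s\<in>{0<..<1}. g s \<le> 1} \<le> emeasure lborel {t..<1}"
      by (rule emeasure_mono) simp
    moreover have "emeasure lborel {s\<in>{0<..<1}. g s \<le> 1} = emeasure lborel {s\<in>{0<..<1}. h s \<le> 1}"
      by (rule geq)
    moreover have "{s\<in>{0<..<1}. h s \<le> 1} = {0<..<1}" using hb by force
    ultimately have "ennreal 1 \<le> ennreal (1 - t)" using t0 by simp
    then show False using t0 by (simp add: ennreal_le_iff)
  qed
qed

lemma g_dfun: "dfun g"
  by unfold_locales (auto simp: g_bnd)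

lemma mh_eq: "mh g = mh h"
proof
  fix y
  have "measure lborel {t\<in>{0<..<1}. g t \<le> y} = measure lborel {t\<in>{0<..<1}. h t \<le> y}"
    unfolding measure_def using geq by simp
  then show "mh g y = mh h y" using dfun.mh_compl[OF g_dfun] mh_compl by simp
qed

lemma mhmh:
  assumes w: "w \<in> {0<..<1}" and c: "continuous (at w within {0<..<1}) g"
  shows "mh (mh g) w = g w"
proof -
  have mg[measurable]: "mh g \<in> borel_measurable borel" by (rule dfun.mh_meas[OF g_dfun])
  have X: "{t\<in>{0<..<1}. w < mh g t} \<in> sets lborel" by measurable
  have "measure lborel {t\<in>{0<..<1}. w < mh g t} = g w"
  proof (rule measure_ae_interval[OF X _ countable_empty])
    show "0 \<le> g w" "g w \<le> 1" using g_bnd[OF w] by auto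
    show "{t\<in>{0<..<1}. w < mh g t} \<subseteq> {0<..<1}" by auto
    fix t assume t: "t \<in> {0<..<1::real}" "t \<notin> {}" "t \<noteq> g w"
    show "t \<in> {t\<in>{0<..<1}. w < mh g t} \<longleftrightarrow> t < g w"
    proof (cases "t < g w")
      case True
      obtain d where d: "d > 0" "\<And>x. x \<in> {0<..<1} \<Longrightarrow> dist x w < d \<Longrightarrow> dist (g x) (g w) < g w - t"
        using c True unfolding continuous_within_eps_delta by (metis diff_gt_0_iff_gt)
      define \<mu> where "\<mu> = min d (1 - w)"
      define w' where "w' = w + \<mu> / 2"
      have m1: "0 < \<mu>" using d w by (simp add: \<mu>_def)
      have m2: "\<mu> \<le> 1 - w" "\<mu> \<le> d" by (simp_all add: \<mu>_def)
      have w'1: "w < w'" unfolding w'_def using m1 by simp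
      have w'2: "w' < 1" unfolding w'_def using m1 m2 by simp
      have w': "w < w'" "w' < 1" "w' \<in> {0<..<1}" using w'1 w'2 w by auto
      have "dist w' w = \<mu> / 2" using m1 by (simp add: w'_def dist_real_def)
      then have "dist w' w < d" using m1 m2 by linarith
      then have "dist (g w') (g w) < g w - t" using d(2) w' by auto
      then have gw': "t < g w'" by (auto simp: dist_real_def)
      have sub: "{0<..w'} \<subseteq> {s\<in>{0<..<1}. t < g s}"
      proof
        fix s assume s: "s \<in> {0<..w'}"
        then have "g w' \<le> g s" using ganti'[of s w'] w' by auto
        then show "s \<in> {s\<in>{0<..<1}. t < g s}" using s w' gw' by auto
      qed
      have "w' \<le> measure lborel {s\<in>{0<..<1}. t < g s}"
      proof -
        have "measure lborel {0<..w'} \<le> measure lborel {s\<in>{0<..<1}. t < g s}"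
          by (rule measure_mono_fmeasurable[OF sub _ dfun.fm_sub[OF g_dfun _ dfun.sets_lt[OF g_dfun]]]) auto
        then show ?thesis using w' by simp
      qed
      then have "w < mh g t" using w' by (simp add: mh_def)
      then show ?thesis using True t by auto
    next
      case False
      then have tg: "g w < t" using t by auto
      have sub: "{s\<in>{0<..<1}. t < g s} \<subseteq> {0<..<w}"
      proof
        fix s assume s: "s \<in> {s\<in>{0<..<1}. t < g s}"
        show "s \<in> {0<..<w}"
        proof (rule ccontr)
          assume "s \<notin> {0<..<w}"
          then have "w \<le> s" using s by auto
          then have "g s \<le> g w" using ganti'[of w s] s w by auto
          then show False using s tg by auto
        qed
      qed
      have "measure lborel {s\<in>{0<..<1}. t < g s} \<le> measure lborel {0<..<w}"
        by (rule measure_mono_fmeasurable[OF sub dfun.sets_lt[OF g_dfun] fm_sub]) (use w in auto)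
      then have "\<not> w < mh g t" using w by (simp add: mh_def)
      then show ?thesis using False t by auto
    qed
  qed
  then show ?thesis by (simp add: mh_def)
qed

lemma g_int: "g integrable_on {0..1}"
proof -
  define g' where "g' = (\<lambda>t. if t \<le> 0 then 1 else if 1 \<le> t then 0 else g t)"
  have "mono_on {0..1} (\<lambda>t. - g' t)"
  proof (rule mono_onI)
    fix r s :: real assume rs: "r \<in> {0..1}" "s \<in> {0..1}" "r \<le> s"
    show "- g' r \<le> - g' s"
      using rs g_bnd[of r] g_bnd[of s] ganti'[of r s] by (auto simp: g'_def)
  qed
  then have "(\<lambda>t. - g' t) integrable_on {0..1}" by (rule integrable_on_mono_on)
  then have "(\<lambda>t. - (- g' t)) integrable_on {0..1}" by (rule integrable_neg)
  then have "g' integrable_on {0..1}" by simp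
  then show ?thesis
    by (rule integrable_spike_finite[where S="{0,1}" and f=g' and g=g, rotated 2]) (auto simp: g'_def)
qed

end

lemma mh_int:
  fixes f :: "real \<Rightarrow> real"
  assumes "antimono f" shows "f integrable_on {0..1::real}"
proof -
  have "mono_on {0..1} (\<lambda>t. - f t)"
  proof (rule mono_onI)
    fix r s :: real assume "r \<le> s"
    then have "f s \<le> f r" using assms by (simp add: antimono_def)
    then show "- f r \<le> - f s" by simp
  qed
  then have "(\<lambda>t. - f t) integrable_on {0..1}" by (rule integrable_on_mono_on)
  then have "(\<lambda>t. - (- f t)) integrable_on {0..1}" by (rule integrable_neg)
  then show ?thesis by simp
qed


lemma ifv_eq: "ifv h = (\<lambda>t. if t \<in> {0<..<1} then h t else 0)"
  by (rule ext) (simp add: ifv_def)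

lemma part_ii:
  assumes C: "is_copula C" and u: "u \<in> {0..1}" and v: "v \<in> {0..1}"
  shows "cop_T (cop_join C Pi_cop) u v = C_up C u v \<and> cop_T (C_up C) u v = cop_join C Pi_cop u v"
proof -
  define h where "h = partial2 C u"
  interpret dfun h
  proof
    show "ifv h \<in> borel_measurable borel"
      unfolding ifv_eq h_def by (rule partial2_meas[OF C u])
    fix t :: real assume "t \<in> {0<..<1}"
    then show "0 \<le> h t \<and> h t \<le> 1" unfolding h_def by (rule partial2_bnd[OF C u])
  qed
  define g where "g = decr_rearr h"
  have spec: "antimono_on {0<..<1} g \<and>
      (\<forall>y. emeasure lborel {t\<in>{0<..<1}. g t \<le> y} = emeasure lborel {t\<in>{0<..<1}. h t \<le> y})"
    unfolding g_def decr_rearr_def by (rule someI_ex[OF decr_exists])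
  interpret gfun h g
    by unfold_locales (use spec in auto)
  have cmh: "countable {t. \<not> isCont (mh h) t}"
  proof -
    have "mono (\<lambda>t. - mh h t)" using mh_anti by (auto simp: mono_def antimono_def)
    then have c: "countable {a. \<not> isCont (\<lambda>t. - mh h t) a}" by (rule mono_ctble_discont)
    have "{t. \<not> isCont (mh h) t} \<subseteq> {a. \<not> isCont (\<lambda>t. - mh h t) a}"
    proof (intro subsetI CollectI notI)
      fix t assume "t \<in> {t. \<not> isCont (mh h) t}" "isCont (\<lambda>t. - mh h t) t"
      then show False using continuous_minus[of "at t" "\<lambda>t. - mh h t"] by simp
    qed
    then show ?thesis using c countable_subset by blast
  qed
  have cg: "countable {t \<in> {0<..<1}. \<not> continuous (at t within {0<..<1}) g}"
  proof -
    have "mono_on {0<..<1} (\<lambda>t. - g t)" by (rule mono_onI) (metis ganti' neg_le_iff_le)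
    then have c: "countable {t \<in> {0<..<1}. \<not> continuous (at t within {0<..<1}) (\<lambda>t. - g t)}"
      by (rule mono_on_ctble_discont)
    have "{t \<in> {0<..<1}. \<not> continuous (at t within {0<..<1}) g} \<subseteq>
          {t \<in> {0<..<1}. \<not> continuous (at t within {0<..<1}) (\<lambda>t. - g t)}"
    proof (intro subsetI CollectI conjI notI)
      fix t assume t: "t \<in> {t \<in> {0<..<1}. \<not> continuous (at t within {0<..<1}) g}"
      then show "t \<in> {0<..<1}" by simp
      assume "continuous (at t within {0<..<1}) (\<lambda>t. - g t)"
      then show False using t continuous_minus[of "at t within {0<..<1}" "\<lambda>t. - g t"] by simp
    qed
    then show ?thesis using c countable_subset by blast
  qed
  define S1 where "S1 = {0, 1} \<union> {t. \<not> isCont (mh h) t}"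
  have nS1: "negligible S1" unfolding S1_def using cmh by (intro negl_countable) auto
  define S2 where "S2 = {0, 1} \<union> {t \<in> {0<..<1}. \<not> continuous (at t within {0<..<1}) g}"
  have nS2: "negligible S2" unfolding S2_def using cg by (intro negl_countable) auto
  have mhi: "mh h integrable_on {0..1}" by (rule mh_int[OF mh_anti])
  have Kj: "cop_join C Pi_cop u s = integral {0..s} (mh h)" if "s \<in> {0<..<1}" for s
    unfolding h_def by (rule cop_join_layer[OF C u]) (use that in auto)
  have dK1: "partial2 (cop_join C Pi_cop) u t = mh h t" if t: "t \<in> {0<..<1}" "isCont (mh h) t" for t
    by (rule partial2_from_deriv, rule deriv_int[OF mhi t]) (rule Kj)
  have dK2: "partial2 (C_up C) u t = g t" if t: "t \<in> {0<..<1}" "continuous (at t within {0<..<1}) g" for t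
  proof (rule partial2_from_deriv, rule deriv_int[OF g_int t(1)])
    show "isCont g t" using t continuous_within_open[of t "{0<..<1}" g] by auto
    fix s :: real
    show "C_up C u s = integral {0..s} g" by (simp add: C_up_def g_def h_def)
  qed
  have mhm: "(\<lambda>t. if t \<in> {0<..<1} then mh h t else 0) \<in> borel_measurable borel" by measurable
  have A: "cop_T (cop_join C Pi_cop) u v = C_up C u v"
  proof -
    have "cop_T (cop_join C Pi_cop) u v = integral {0..1} (\<lambda>t. min (partial2 (cop_join C Pi_cop) u t) v)"
      by (rule cop_T_eq)
    also have "\<dots> = integral {0..1} (\<lambda>t. min (mh h t) v)"
      by (rule integral_spike[OF nS1]) (auto simp: S1_def dK1)
    also have "\<dots> = integral {0..v} (mh (mh h))"
    proof -
      have e: "mh (mh h) = (\<lambda>w. measure lborel {t\<in>{0<..<1}. w < mh h t})" by (rule ext) (rule mh_def)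
      show ?thesis unfolding e by (rule layer_cake[OF mhm]) (use mh_bnd v in auto)
    qed
    also have "\<dots> = integral {0..v} (mh (mh g))" by (simp add: mh_eq)
    also have "\<dots> = integral {0..v} g"
    proof (rule integral_spike[OF nS2])
      fix t assume t: "t \<in> {0..v} - S2"
      then have "t \<in> {0<..<1}" using v by (auto simp: S2_def)
      then show "g t = mh (mh g) t" using t by (intro mhmh[symmetric]) (auto simp: S2_def)
    qed
    also have "\<dots> = C_up C u v" by (simp add: C_up_def g_def h_def)
    finally show ?thesis .
  qed
  have B: "cop_T (C_up C) u v = cop_join C Pi_cop u v"
  proof -
    have "cop_T (C_up C) u v = integral {0..1} (\<lambda>t. min (partial2 (C_up C) u t) v)"
      by (rule cop_T_eq)
    also have "\<dots> = integral {0..1} (\<lambda>t. min (g t) v)"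
      by (rule integral_spike[OF nS2]) (auto simp: S2_def dK2)
    also have "\<dots> = integral {0..v} (mh g)"
    proof -
      have e: "mh g = (\<lambda>w. measure lborel {t\<in>{0<..<1}. w < g t})" by (rule ext) (rule mh_def)
      show ?thesis unfolding e by (rule layer_cake[OF g_meas[unfolded ifv_eq]]) (use g_bnd v in auto)
    qed
    also have "\<dots> = integral {0..v} (mh h)" by (simp add: mh_eq)
    also have "\<dots> = cop_join C Pi_cop u v" unfolding h_def by (rule cop_join_layer[OF C u v, symmetric])
    finally show ?thesis .
  qed
  show ?thesis using A B by simp
qed

theorem mainTheorem10:
  shows "(\<forall>D. is_SI_copula D \<longrightarrow>
            (\<forall>u\<in>{0..1}. \<forall>v\<in>{0..1}. cop_T D u v = cop_S D u v)) \<and>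
         (\<forall>C. is_copula C \<longrightarrow>
            (\<forall>u\<in>{0..1}. \<forall>v\<in>{0..1}.
               cop_T (cop_join C Pi_cop) u v = C_up C u v \<and>
               cop_T (C_up C) u v = cop_join C Pi_cop u v))"
  using part_i part_ii by blast


end
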